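(* Let $G$ be an abelian Hausdorff topological group and $\kappa$ a cardinal. The following are equivalent: (i) $G$ contains a subgroup topologically isomorphic to a direct sum of $\kappa$-many non-trivial topological groups; (ii) $G$ contains a topologically independent absolutely Cauchy summable set of size $\kappa$.
   Context: All groups are abelian; topological groups are Hausdorff. The direct sum $\bigoplus_{i\in I}H_i$ of topological groups is the subgroup of the product $\prod_{i\in I}H_i$ consisting of elements with finitely many non-zero coordinates, equipped with the subspace topology of the Tychonoff product topology. A subset $A\subseteq G$ is absolutely Cauchy summable if for every neighbourhood $U$ of $0$ there is a finite $F\subseteq A$ such that the subgroup $\langle A\setminus F\rangle$ generated by $A\setminus F$ is contained in $U$. A subset $A\subseteq G$ is topologically independent if $0\notin A$ and for every neighbourhood $W$ of $0$ there is a neighbourhood $U$ of $0$ such that for every finite $F\subseteq A$ and all integers $\{z_a:a\in F\}$, $\sum_{a\in F}z_aa\in U$ implies $z_aa\in W$ for all $a\in F$. *)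

theory Defs
  imports "HOL-Analysis.Analysis" "HOL-Library.Equipollence"
begin

definition ab_topgroup :: "'b topology \<Rightarrow> ('b \<Rightarrow> 'b \<Rightarrow> 'b) \<Rightarrow> 'b \<Rightarrow> ('b \<Rightarrow> 'b) \<Rightarrow> bool" where
  "ab_topgroup T p e n \<longleftrightarrow>
     e \<in> topspace T \<and>
     (\<forall>x\<in>topspace T. \<forall>y\<in>topspace T. p x y \<in> topspace T) \<and>
     (\<forall>x\<in>topspace T. n x \<in> topspace T) \<and>
     (\<forall>x\<in>topspace T. \<forall>y\<in>topspace T. \<forall>z\<in>topspace T. p (p x y) z = p x (p y z)) \<and>
     (\<forall>x\<in>topspace T. \<forall>y\<in>topspace T. p x y = p y x) \<and>
     (\<forall>x\<in>topspace T. p e x = x) \<and>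
     (\<forall>x\<in>topspace T. p (n x) x = e) \<and>
     Hausdorff_space T \<and>
     continuous_map (prod_topology T T) T (\<lambda>(x, y). p x y) \<and>
     continuous_map T T n"

definition dsum_carrier :: "'i set \<Rightarrow> ('i \<Rightarrow> 'b topology) \<Rightarrow> ('i \<Rightarrow> 'b) \<Rightarrow> ('i \<Rightarrow> 'b) set" where
  "dsum_carrier I T e = {x \<in> PiE I (\<lambda>i. topspace (T i)). finite {i \<in> I. x i \<noteq> e i}}"

definition dsum_topology :: "'i set \<Rightarrow> ('i \<Rightarrow> 'b topology) \<Rightarrow> ('i \<Rightarrow> 'b) \<Rightarrow> ('i \<Rightarrow> 'b) topology" where
  "dsum_topology I T e = subtopology (product_topology T I) (dsum_carrier I T e)"

definition dsum_add :: "'i set \<Rightarrow> ('i \<Rightarrow> 'b \<Rightarrow> 'b \<Rightarrow> 'b) \<Rightarrow> ('i \<Rightarrow> 'b) \<Rightarrow> ('i \<Rightarrow> 'b) \<Rightarrow> ('i \<Rightarrow> 'b)" where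
  "dsum_add I p x y = restrict (\<lambda>i. p i (x i) (y i)) I"

definition embeds_direct_sum ::
  "'i set \<Rightarrow> ('i \<Rightarrow> 'b topology) \<Rightarrow> ('i \<Rightarrow> 'b \<Rightarrow> 'b \<Rightarrow> 'b) \<Rightarrow> ('i \<Rightarrow> 'b) \<Rightarrow> ('i \<Rightarrow> 'b \<Rightarrow> 'b)
    \<Rightarrow> (('i \<Rightarrow> 'b) \<Rightarrow> 'a::{topological_ab_group_add, t2_space}) \<Rightarrow> bool" where
  "embeds_direct_sum I T p e n f \<longleftrightarrow>
     (\<forall>i\<in>I. ab_topgroup (T i) (p i) (e i) (n i) \<and> topspace (T i) \<noteq> {e i}) \<and>
     (\<forall>x\<in>dsum_carrier I T e. \<forall>y\<in>dsum_carrier I T e.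
        f (dsum_add I p x y) = f x + f y) \<and>
     homeomorphic_map (dsum_topology I T e) (top_of_set (f ` dsum_carrier I T e)) f"

definition is_subgroup :: "'a::ab_group_add set \<Rightarrow> bool" where
  "is_subgroup H \<longleftrightarrow> 0 \<in> H \<and> (\<forall>x\<in>H. \<forall>y\<in>H. x + y \<in> H) \<and> (\<forall>x\<in>H. - x \<in> H)"

definition gen_subgroup :: "'a::ab_group_add set \<Rightarrow> 'a set" where
  "gen_subgroup S = \<Inter>{H. is_subgroup H \<and> S \<subseteq> H}"

definition zmult :: "int \<Rightarrow> 'a::ab_group_add \<Rightarrow> 'a" where
  "zmult z a = (if 0 \<le> z then (\<Sum>k<nat z. a) else - (\<Sum>k<nat (- z). a))"

definition abs_cauchy_summable :: "'a::{topological_ab_group_add, t2_space} set \<Rightarrow> bool" where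
  "abs_cauchy_summable A \<longleftrightarrow>
     (\<forall>U. 0 \<in> interior U \<longrightarrow> (\<exists>F. finite F \<and> F \<subseteq> A \<and> gen_subgroup (A - F) \<subseteq> U))"

definition top_independent :: "'a::{topological_ab_group_add, t2_space} set \<Rightarrow> bool" where
  "top_independent A \<longleftrightarrow> 0 \<notin> A \<and>
     (\<forall>W. 0 \<in> interior W \<longrightarrow> (\<exists>U. 0 \<in> interior U \<and>
        (\<forall>F z. finite F \<and> F \<subseteq> A \<and> (\<Sum>a\<in>F. zmult (z a) a) \<in> U
             \<longrightarrow> (\<forall>a\<in>F. zmult (z a) a \<in> W))))"

end

theory Submission
  imports Defs
begin


lemma subgroup_sum:
  assumes "is_subgroup H" "finite F" "\<And>x. x \<in> F \<Longrightarrow> g x \<in> H"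
  shows "sum g F \<in> H"
  using assms(2,3)
proof (induction F rule: finite_induct)
  case empty then show ?case using assms(1) by (simp add: is_subgroup_def)
next
  case (insert x F) then show ?case using assms(1) by (simp add: is_subgroup_def)
qed

lemma subgroup_zmult:
  assumes "is_subgroup H" "a \<in> H" shows "zmult z a \<in> H"
proof -
  have "(\<Sum>k<m. a) \<in> H" for m :: nat using subgroup_sum[OF assms(1), of "{..<m::nat}" "\<lambda>_. a"] assms(2) by simp
  then show ?thesis using assms(1) unfolding zmult_def is_subgroup_def by auto
qed

lemma gen_subgroup_least: "is_subgroup H \<Longrightarrow> S \<subseteq> H \<Longrightarrow> gen_subgroup S \<subseteq> H"
  unfolding gen_subgroup_def by blast

lemma gen_subgroup_sub: "is_subgroup (gen_subgroup S)" "S \<subseteq> gen_subgroup S"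
  unfolding gen_subgroup_def is_subgroup_def by auto

lemma zmult_0 [simp]: "zmult 0 a = 0" by (simp add: zmult_def)
lemma zmult_1 [simp]: "zmult 1 a = a" by (simp add: zmult_def)

lemma zmult_add1: "zmult (z + 1) a = zmult z a + a"
proof (cases "0 \<le> z")
  case True
  then have "nat (z+1) = Suc (nat z)" by simp
  then show ?thesis using True by (simp add: zmult_def add.commute)
next
  case False
  then have z: "nat (-z) = Suc (nat (-(z+1)))" by simp
  show ?thesis
  proof (cases "z = -1")
    case True then show ?thesis by (simp add: zmult_def)
  next
    case False
    then have "\<not> 0 \<le> z + 1" using \<open>\<not> 0 \<le> z\<close> by simp
    then show ?thesis using \<open>\<not> 0 \<le> z\<close> z by (simp add: zmult_def algebra_simps)
  qed
qed

lemma zmult_add: "zmult (z + w) a = zmult z a + zmult w a"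
proof (induction w rule: int_induct[where k=0])
  case base then show ?case by simp
next
  case (step1 i)
  have "zmult (z + (i+1)) a = zmult (z+i) a + a" using zmult_add1[of "z+i" a] by (simp add: add.assoc)
  then show ?case using step1 zmult_add1[of i a] by (simp add: algebra_simps)
next
  case (step2 i)
  have "zmult (z + i) a = zmult (z+(i - 1)) a + a" using zmult_add1[of "z+(i - 1)" a] by (simp add: algebra_simps)
  moreover have "zmult i a = zmult (i - 1) a + a" using zmult_add1[of "i - 1" a] by simp
  ultimately show ?case using step2 by (simp add: algebra_simps)
qed

lemma zmult_neg: "zmult (- z) a = - zmult z a"
  using zmult_add[of z "-z" a] by (simp add: eq_neg_iff_add_eq_0 add.commute)




lemma abg:
  assumes "ab_topgroup T p e n"
  shows abg_e: "e \<in> topspace T"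
    and abg_add: "\<And>x y. x \<in> topspace T \<Longrightarrow> y \<in> topspace T \<Longrightarrow> p x y \<in> topspace T"
    and abg_neg: "\<And>x. x \<in> topspace T \<Longrightarrow> n x \<in> topspace T"
    and abg_comm: "\<And>x y. x \<in> topspace T \<Longrightarrow> y \<in> topspace T \<Longrightarrow> p x y = p y x"
    and abg_lid: "\<And>x. x \<in> topspace T \<Longrightarrow> p e x = x"
    and abg_rid: "\<And>x. x \<in> topspace T \<Longrightarrow> p x e = x"
    and abg_rinv: "\<And>x. x \<in> topspace T \<Longrightarrow> p x (n x) = e"
    and abg_ee: "n e = e"
proof -
  note a = assms[unfolded ab_topgroup_def]
  show e: "e \<in> topspace T" using a by blast
  show "\<And>x y. x \<in> topspace T \<Longrightarrow> y \<in> topspace T \<Longrightarrow> p x y \<in> topspace T" using a by blast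
  show "\<And>x. x \<in> topspace T \<Longrightarrow> n x \<in> topspace T" using a by blast
  show "\<And>x y. x \<in> topspace T \<Longrightarrow> y \<in> topspace T \<Longrightarrow> p x y = p y x" using a by blast
  show "\<And>x. x \<in> topspace T \<Longrightarrow> p e x = x" using a by blast
  show "\<And>x. x \<in> topspace T \<Longrightarrow> p x e = x" using a by metis
  show "\<And>x. x \<in> topspace T \<Longrightarrow> p x (n x) = e" using a by metis
  have "p (n e) e = e" using a by blast
  moreover have "p (n e) e = n e" using a e by metis
  ultimately show "n e = e" by simp
qed

lemma dsum_carrier_zero:
  assumes "\<forall>i\<in>I. ab_topgroup (T i) (p i) (e i) (n i)"
  shows "restrict e I \<in> dsum_carrier I T e"
  using assms abg_e[OF assms[rule_format]] unfolding dsum_carrier_def by auto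

lemma dsum_carrier_PiE: "x \<in> dsum_carrier I T e \<Longrightarrow> x \<in> PiE I (\<lambda>i. topspace (T i))"
  unfolding dsum_carrier_def by auto

lemma dsum_add_closed:
  assumes G: "\<forall>i\<in>I. ab_topgroup (T i) (p i) (e i) (n i)"
    and x: "x \<in> dsum_carrier I T e" and y: "y \<in> dsum_carrier I T e"
  shows "dsum_add I p x y \<in> dsum_carrier I T e"
proof -
  have fx: "finite {i \<in> I. x i \<noteq> e i}" and fy: "finite {i \<in> I. y i \<noteq> e i}"
    using x y unfolding dsum_carrier_def by auto
  have sub: "{i \<in> I. p i (x i) (y i) \<noteq> e i} \<subseteq> {i \<in> I. x i \<noteq> e i} \<union> {i \<in> I. y i \<noteq> e i}"
    using abg_lid[OF G[rule_format]] abg_e[OF G[rule_format]] by fastforce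
  have "finite {i \<in> I. p i (x i) (y i) \<noteq> e i}" using finite_subset[OF sub] fx fy by blast
  moreover have "dsum_add I p x y \<in> PiE I (\<lambda>i. topspace (T i))"
    using x y abg_add[OF G[rule_format]] unfolding dsum_carrier_def dsum_add_def by (auto simp: PiE_iff)
  moreover have "{i \<in> I. dsum_add I p x y i \<noteq> e i} = {i \<in> I. p i (x i) (y i) \<noteq> e i}"
    unfolding dsum_add_def by auto
  ultimately show ?thesis unfolding dsum_carrier_def by auto
qed

lemma topspace_dsum: "topspace (dsum_topology I T e) = dsum_carrier I T e"
  unfolding dsum_topology_def dsum_carrier_def by auto

definition DK where "DK I T e K = {x \<in> dsum_carrier I T e. \<forall>i\<in>K \<inter> I. x i = e i}"

lemma embeds_facts:
  assumes E: "embeds_direct_sum I T p e n f"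
  shows emb_grp: "\<forall>i\<in>I. ab_topgroup (T i) (p i) (e i) (n i)"
    and emb_hom: "\<And>x y. x \<in> dsum_carrier I T e \<Longrightarrow> y \<in> dsum_carrier I T e \<Longrightarrow> f (dsum_add I p x y) = f x + f y"
    and emb_homeo: "homeomorphic_map (dsum_topology I T e) (top_of_set (f ` dsum_carrier I T e)) f"
    and emb_inj: "inj_on f (dsum_carrier I T e)"
    and emb_zero: "f (restrict e I) = 0"
proof -
  show G: "\<forall>i\<in>I. ab_topgroup (T i) (p i) (e i) (n i)" using E unfolding embeds_direct_sum_def by blast
  show H: "\<And>x y. x \<in> dsum_carrier I T e \<Longrightarrow> y \<in> dsum_carrier I T e \<Longrightarrow> f (dsum_add I p x y) = f x + f y"
    using E unfolding embeds_direct_sum_def by blast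
  show M: "homeomorphic_map (dsum_topology I T e) (top_of_set (f ` dsum_carrier I T e)) f"
    using E unfolding embeds_direct_sum_def by blast
  show "inj_on f (dsum_carrier I T e)" using homeomorphic_imp_injective_map[OF M] by (simp add: topspace_dsum)
  have z: "restrict e I \<in> dsum_carrier I T e" by (rule dsum_carrier_zero[OF G])
  have "dsum_add I p (restrict e I) (restrict e I) = restrict e I"
    using abg_lid[OF G[rule_format]] abg_e[OF G[rule_format]] unfolding dsum_add_def by (auto simp: fun_eq_iff)
  then have "f (restrict e I) = f (restrict e I) + f (restrict e I)" using H[OF z z] by simp
  then show "f (restrict e I) = 0" by simp
qed

lemma DK_subgroup:
  assumes E: "embeds_direct_sum I T p e n f"
  shows "is_subgroup (f ` DK I T e K)"
proof -
  note G = emb_grp[OF E]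
  let ?D = "dsum_carrier I T e"
  have "restrict e I \<in> DK I T e K" using dsum_carrier_zero[OF G] unfolding DK_def by auto
  then have 0: "0 \<in> f ` DK I T e K" using emb_zero[OF E] by force
  have add: "f x + f y \<in> f ` DK I T e K" if "x \<in> DK I T e K" "y \<in> DK I T e K" for x y
  proof -
    have xy: "x \<in> ?D" "y \<in> ?D" using that unfolding DK_def by auto
    have "dsum_add I p x y \<in> DK I T e K"
      using dsum_add_closed[OF G xy] that abg_lid[OF G[rule_format]] abg_e[OF G[rule_format]] unfolding DK_def dsum_add_def
      by (auto simp: restrict_def)
    then show ?thesis using emb_hom[OF E xy] by (metis image_eqI)
  qed
  have neg: "- f x \<in> f ` DK I T e K" if "x \<in> DK I T e K" for x
  proof -
    define y where "y = restrict (\<lambda>i. n i (x i)) I"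
    have x: "x \<in> ?D" using that unfolding DK_def by auto
    have xP: "x \<in> PiE I (\<lambda>i. topspace (T i))" using dsum_carrier_PiE[OF x] .
    have sub: "{i \<in> I. y i \<noteq> e i} \<subseteq> {i \<in> I. x i \<noteq> e i}"
      using abg_ee[OF G[rule_format]] unfolding y_def by auto
    have "finite {i \<in> I. x i \<noteq> e i}" using x unfolding dsum_carrier_def by auto
    then have "finite {i \<in> I. y i \<noteq> e i}" using finite_subset[OF sub] by blast
    moreover have "y \<in> PiE I (\<lambda>i. topspace (T i))" using xP abg_neg[OF G[rule_format]] unfolding y_def by auto
    ultimately have yD: "y \<in> ?D" unfolding dsum_carrier_def by auto
    have yK: "y \<in> DK I T e K"
      using that yD abg_ee[OF G[rule_format]] unfolding DK_def y_def by auto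
    have "dsum_add I p x y = restrict e I"
      using xP abg_rinv[OF G[rule_format]] unfolding dsum_add_def y_def by (auto simp: fun_eq_iff PiE_iff)
    then have "f x + f y = 0" using emb_hom[OF E x yD] emb_zero[OF E] by simp
    then have "- f x = f y" by (simp add: add_eq_0_iff)
    then show ?thesis using yK by blast
  qed
  show ?thesis unfolding is_subgroup_def using 0 add neg by blast
qed




lemma emb_nbhd:
  assumes E: "embeds_direct_sum I T p e n f" and Q: "open Q" "0 \<in> Q"
  obtains V where "\<forall>i\<in>I. openin (T i) (V i)" "finite {i\<in>I. V i \<noteq> topspace (T i)}"
    "restrict e I \<in> PiE I V" "f ` (PiE I V \<inter> dsum_carrier I T e) \<subseteq> Q"
    "\<exists>Q'. open Q' \<and> f ` (PiE I V \<inter> dsum_carrier I T e) = f ` dsum_carrier I T e \<inter> Q'"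
proof -
  let ?D = "dsum_carrier I T e"
  note M = emb_homeo[OF E]
  have cont: "continuous_map (dsum_topology I T e) (top_of_set (f ` ?D)) f"
    using homeomorphic_imp_continuous_map[OF M] .
  have "openin (top_of_set (f ` ?D)) (f ` ?D \<inter> Q)" unfolding openin_open using Q(1) by blast
  from openin_continuous_map_preimage[OF cont this]
  have "openin (subtopology (product_topology T I) ?D) {x \<in> ?D. f x \<in> f ` ?D \<inter> Q}"
    unfolding topspace_dsum unfolding dsum_topology_def .
  then obtain Q' where Q': "openin (product_topology T I) Q'"
    and eq: "{x \<in> ?D. f x \<in> f ` ?D \<inter> Q} = Q' \<inter> ?D"
    unfolding openin_subtopology by blast
  have z: "restrict e I \<in> ?D" using dsum_carrier_zero[OF emb_grp[OF E]] .
  then have "restrict e I \<in> {x \<in> ?D. f x \<in> f ` ?D \<inter> Q}" using emb_zero[OF E] Q(2) by simp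
  then have "restrict e I \<in> Q' \<inter> ?D" unfolding eq .
  then have "restrict e I \<in> Q'" by simp
  then obtain V where V: "finite {i \<in> I. V i \<noteq> topspace(T i)}" "\<forall>i \<in> I. openin (T i) (V i)"
     "restrict e I \<in> Pi\<^sub>E I V" "Pi\<^sub>E I V \<subseteq> Q'"
    using Q' unfolding openin_product_topology_alt by meson
  have sub: "f ` (PiE I V \<inter> ?D) \<subseteq> Q"
  proof
    fix y assume "y \<in> f ` (PiE I V \<inter> ?D)"
    then obtain x where x: "x \<in> PiE I V" "x \<in> ?D" "y = f x" by blast
    then have "x \<in> Q' \<inter> ?D" using V(4) by blast
    then have "x \<in> {x \<in> ?D. f x \<in> f ` ?D \<inter> Q}" unfolding eq .
    then show "y \<in> Q" using x by simp
  qed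
  have "openin (product_topology T I) (PiE I V)" using V(1,2) by (simp add: openin_PiE_gen)
  then have "openin (dsum_topology I T e) (PiE I V \<inter> ?D)"
    unfolding dsum_topology_def by (rule openin_subtopology_Int)
  then have "openin (top_of_set (f ` ?D)) (f ` (PiE I V \<inter> ?D))"
    using homeomorphic_imp_open_map[OF M] unfolding open_map_def by blast
  then have ex: "\<exists>Q'. open Q' \<and> f ` (PiE I V \<inter> ?D) = f ` ?D \<inter> Q'"
    unfolding openin_open .
  show ?thesis by (rule that[OF V(2) V(1) V(3) sub ex])
qed




lemma direction1:
  fixes f :: "('i \<Rightarrow> 'b) \<Rightarrow> 'a::{topological_ab_group_add, t2_space}"
  assumes E: "embeds_direct_sum I T p e n f"
  shows "\<exists>A :: 'a set. top_independent A \<and> abs_cauchy_summable A \<and> A \<approx> I"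
proof -
  let ?D = "dsum_carrier I T e"
  note G = emb_grp[OF E]
  have ex: "\<forall>i\<in>I. \<exists>g. g \<in> topspace (T i) \<and> g \<noteq> e i"
  proof
    fix i assume i: "i \<in> I"
    have "topspace (T i) \<noteq> {e i}" using E[unfolded embeds_direct_sum_def, THEN conjunct1] i by blast
    moreover have "e i \<in> topspace (T i)" using abg_e[OF G[rule_format, OF i]] .
    ultimately show "\<exists>g. g \<in> topspace (T i) \<and> g \<noteq> e i" by blast
  qed
  obtain g where g0: "\<forall>i\<in>I. g i \<in> topspace (T i) \<and> g i \<noteq> e i" using bchoice[OF ex] by blast
  have g: "\<And>i. i \<in> I \<Longrightarrow> g i \<in> topspace (T i) \<and> g i \<noteq> e i" using g0 by blast
  define \<delta> where "\<delta> i = restrict (\<lambda>j. if j = i then g i else e j) I" for i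
  define b where "b i = f (\<delta> i)" for i
  have \<delta>D: "\<delta> i \<in> ?D" if "i \<in> I" for i
  proof -
    have "{j \<in> I. \<delta> i j \<noteq> e j} \<subseteq> {i}" unfolding \<delta>_def by auto
    then have "finite {j \<in> I. \<delta> i j \<noteq> e j}" using finite_subset by blast
    moreover have "\<delta> i \<in> PiE I (\<lambda>i. topspace (T i))"
      using g that abg_e[OF G[rule_format]] unfolding \<delta>_def by auto
    ultimately show ?thesis unfolding dsum_carrier_def by auto
  qed
  have \<delta>K: "\<delta> i \<in> DK I T e K" if "i \<in> I" "i \<notin> K" for i K
    using \<delta>D[OF that(1)] that unfolding DK_def \<delta>_def by auto
  have bK: "b i \<in> f ` DK I T e K" if "i \<in> I" "i \<notin> K" for i K
    using \<delta>K[OF that] unfolding b_def by blast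
  have inj: "inj_on f ?D" using emb_inj[OF E] .
  have injb: "inj_on b I"
  proof (rule inj_onI)
    fix i j assume ij: "i \<in> I" "j \<in> I" "b i = b j"
    have "f (\<delta> i) = f (\<delta> j)" using ij(3) unfolding b_def by simp
    then have "\<delta> i = \<delta> j" using inj_onD[OF inj _ \<delta>D[OF ij(1)] \<delta>D[OF ij(2)]] by simp
    then have "\<delta> i i = \<delta> j i" by simp
    then show "i = j" using g[OF ij(1)] ij(1) unfolding \<delta>_def by (auto split: if_splits)
  qed
  define A where "A = b ` I"
  have z: "restrict e I \<in> ?D" using dsum_carrier_zero[OF G] .
  have b0: "b i \<noteq> 0" if "i \<in> I" for i
  proof
    assume "b i = 0"
    then have "f (\<delta> i) = f (restrict e I)" using emb_zero[OF E] unfolding b_def by simp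
    then have "\<delta> i = restrict e I" using inj_onD[OF inj _ \<delta>D[OF that] z] by simp
    then have "\<delta> i i = e i" using that by simp
    then show False using g[OF that] that unfolding \<delta>_def by simp
  qed
  have eqp: "A \<approx> I" unfolding A_def using inj_on_image_eqpoll_self[OF injb] .
  have DKsub: "DK I T e K \<subseteq> PiE I V"
    if "\<forall>i\<in>I. V i \<noteq> topspace (T i) \<longrightarrow> i \<in> K" "restrict e I \<in> PiE I V" for K V
  proof
    fix x assume x: "x \<in> DK I T e K"
    then have xP: "x \<in> PiE I (\<lambda>i. topspace (T i))" unfolding DK_def using dsum_carrier_PiE by blast
    show "x \<in> PiE I V"
    proof (rule PiE_I)
      fix i assume i: "i \<in> I"
      show "x i \<in> V i"
      proof (cases "V i = topspace (T i)")
        case True then show ?thesis using xP i by auto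
      next
        case False
        then have "x i = e i" using x that(1) i unfolding DK_def by auto
        then show ?thesis using that(2) i by auto
      qed
    next
      fix i assume "i \<notin> I" then show "x i = undefined" using xP by auto
    qed
  qed
  have acs: "abs_cauchy_summable A"
    unfolding abs_cauchy_summable_def
  proof (intro allI impI)
    fix U :: "'a set" assume U: "0 \<in> interior U"
    obtain V where V: "\<forall>i\<in>I. openin (T i) (V i)" "finite {i\<in>I. V i \<noteq> topspace (T i)}"
      "restrict e I \<in> PiE I V" "f ` (PiE I V \<inter> ?D) \<subseteq> interior U"
      "\<exists>Q'. open Q' \<and> f ` (PiE I V \<inter> ?D) = f ` ?D \<inter> Q'"
      by (rule emb_nbhd[OF E open_interior U])
    define F0 where "F0 = {i\<in>I. V i \<noteq> topspace (T i)}"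
    define F where "F = b ` F0"
    have "finite F" "F \<subseteq> A" using V(2) unfolding F_def F0_def A_def by auto
    moreover have "gen_subgroup (A - F) \<subseteq> U"
    proof -
      have "A - F \<subseteq> f ` DK I T e F0"
      proof
        fix a assume "a \<in> A - F"
        then obtain i where i: "i \<in> I" "a = b i" "i \<notin> F0" unfolding A_def F_def by auto
        then show "a \<in> f ` DK I T e F0" using bK by blast
      qed
      then have "gen_subgroup (A - F) \<subseteq> f ` DK I T e F0"
        by (rule gen_subgroup_least[OF DK_subgroup[OF E]])
      also have "\<dots> \<subseteq> f ` (PiE I V \<inter> ?D)"
        using DKsub[where K=F0 and V=V] V(3) unfolding F0_def DK_def by auto
      also have "\<dots> \<subseteq> U" using V(4) interior_subset by blast
      finally show ?thesis .
    qed
    ultimately show "\<exists>F. finite F \<and> F \<subseteq> A \<and> gen_subgroup (A - F) \<subseteq> U" by blast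
  qed
  have ti: "top_independent A"
    unfolding top_independent_def
  proof (intro conjI allI impI)
    show "0 \<notin> A" using b0 unfolding A_def by auto
  next
    fix W :: "'a set" assume W: "0 \<in> interior W"
    obtain V where V: "\<forall>i\<in>I. openin (T i) (V i)" "finite {i\<in>I. V i \<noteq> topspace (T i)}"
      "restrict e I \<in> PiE I V" "f ` (PiE I V \<inter> ?D) \<subseteq> interior W"
      "\<exists>Q'. open Q' \<and> f ` (PiE I V \<inter> ?D) = f ` ?D \<inter> Q'"
      by (rule emb_nbhd[OF E open_interior W])
    then obtain Q where Q: "open Q" "f ` (PiE I V \<inter> ?D) = f ` ?D \<inter> Q" by blast
    have "f (restrict e I) \<in> f ` (PiE I V \<inter> ?D)" using V(3) z by blast
    then have "f (restrict e I) \<in> f ` ?D \<inter> Q" unfolding Q(2) .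
    then have "0 \<in> Q" using emb_zero[OF E] by simp
    then have "0 \<in> interior Q" using Q(1) by (simp add: interior_open)
    moreover have "\<forall>F z. finite F \<and> F \<subseteq> A \<and> (\<Sum>a\<in>F. zmult (z a) a) \<in> Q
             \<longrightarrow> (\<forall>a\<in>F. zmult (z a) a \<in> W)"
    proof (intro allI impI ballI)
      fix F z a0 assume Fz: "finite F \<and> F \<subseteq> A \<and> (\<Sum>a\<in>F. zmult (z a) a) \<in> Q" and a0: "a0 \<in> F"
      have Ffin: "finite F" and FA: "F \<subseteq> A" and FQ: "(\<Sum>a\<in>F. zmult (z a) a) \<in> Q" using Fz by auto
      have "a0 \<in> b ` I" using a0 FA unfolding A_def by blast
      then obtain i0 where i0: "i0 \<in> I" "a0 = b i0" by blast
      have "b i0 \<in> f ` DK I T e (I - {i0})" using bK[of i0 "I - {i0}"] i0(1) by blast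
      then have "zmult (z a0) (b i0) \<in> f ` DK I T e (I - {i0})" by (rule subgroup_zmult[OF DK_subgroup[OF E]])
      then have "zmult (z a0) a0 \<in> f ` DK I T e (I - {i0})" using i0(2) by simp
      then obtain y where y1: "y \<in> DK I T e (I - {i0})" and y2: "zmult (z a0) a0 = f y" by (rule imageE)
      note y = y1 y2[symmetric]
      have "(\<Sum>a\<in>F - {a0}. zmult (z a) a) \<in> f ` DK I T e {i0}"
      proof (rule subgroup_sum[OF DK_subgroup[OF E]])
        show "finite (F - {a0})" using Ffin by simp
      next
        fix a assume a: "a \<in> F - {a0}"
        then have "a \<in> b ` I" using FA unfolding A_def by blast
        then obtain j where j: "j \<in> I" "a = b j" by blast
        have "j \<noteq> i0" using a i0(2) j(2) by blast
        then have "b j \<in> f ` DK I T e {i0}" using bK[of j "{i0}"] j(1) by blast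
        then have "zmult (z a) (b j) \<in> f ` DK I T e {i0}" by (rule subgroup_zmult[OF DK_subgroup[OF E]])
        then show "zmult (z a) a \<in> f ` DK I T e {i0}" using j(2) by simp
      qed
      then obtain w where w1: "w \<in> DK I T e {i0}" and w2: "(\<Sum>a\<in>F - {a0}. zmult (z a) a) = f w" by (rule imageE)
      note w = w1 w2[symmetric]
      have yD: "y \<in> ?D" using y(1) unfolding DK_def by blast
      have wD: "w \<in> ?D" using w(1) unfolding DK_def by blast
      define x where "x = dsum_add I p y w"
      have xD: "x \<in> ?D" unfolding x_def by (rule dsum_add_closed[OF G yD wD])
      have "f x = (\<Sum>a\<in>F. zmult (z a) a)"
        unfolding x_def emb_hom[OF E yD wD] y w
        using sum.remove[OF Ffin a0, of "\<lambda>a. zmult (z a) a"] by simp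
      then have "f x \<in> Q" using FQ by simp
      then have "f x \<in> f ` ?D \<inter> Q" by (rule IntI[OF imageI[OF xD]])
      then have "f x \<in> f ` (PiE I V \<inter> ?D)" unfolding Q(2) .
      then obtain x' where x'1: "x' \<in> PiE I V \<inter> ?D" and x'2: "f x = f x'" by (rule imageE)
      have "x' = x" using inj_onD[OF inj x'2[symmetric] _ xD] x'1 by simp
      then have xV: "x \<in> PiE I V" using x'1 by simp
      have yP: "y \<in> PiE I (\<lambda>i. topspace (T i))" using dsum_carrier_PiE[OF yD] .
      have wi0: "w i0 = e i0" using w1 i0(1) unfolding DK_def by blast
      have yi0: "y i0 \<in> topspace (T i0)" using yP i0(1) by (metis PiE_mem)
      have "x i0 = p i0 (y i0) (w i0)" unfolding x_def dsum_add_def using i0(1) by simp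
      also have "\<dots> = y i0" unfolding wi0 by (rule abg_rid[OF G[rule_format, OF i0(1)] yi0])
      finally have "x i0 = y i0" .
      then have "y i0 \<in> V i0" using xV i0 by (metis PiE_mem)
      moreover have "y j \<in> V j" if "j \<in> I" "j \<noteq> i0" for j
      proof -
        have "y j = e j" using y1 that unfolding DK_def by blast
        moreover have "restrict e I j \<in> V j" using V(3) that(1) by (metis PiE_mem)
        ultimately show ?thesis using that(1) by simp
      qed
      ultimately have yV: "\<And>j. j \<in> I \<Longrightarrow> y j \<in> V j" by metis
      have "y \<in> PiE I V"
      proof (rule PiE_I)
        fix j assume "j \<in> I" then show "y j \<in> V j" by (rule yV)
      next
        fix j assume "j \<notin> I" then show "y j = undefined" using yP by (simp add: PiE_iff extensional_def)
      qed
      then have "y \<in> PiE I V \<inter> ?D" using yD by simp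
      then have "f y \<in> f ` (PiE I V \<inter> ?D)" by (rule imageI)
      then have "f y \<in> interior W" using V(4) by (rule subsetD[rotated])
      then have "f y \<in> W" using interior_subset by (rule subsetD[rotated])
      then show "zmult (z a0) a0 \<in> W" using y2 by simp
    qed
    ultimately show "\<exists>U. 0 \<in> interior U \<and> (\<forall>F z. finite F \<and> F \<subseteq> A \<and> (\<Sum>a\<in>F. zmult (z a) a) \<in> U
             \<longrightarrow> (\<forall>a\<in>F. zmult (z a) a \<in> W))" by blast
  qed
  show ?thesis using ti acs eqp by blast
qed




lemma open_vimage_UNIV: "continuous_on UNIV g \<Longrightarrow> open B \<Longrightarrow> open (g -` B)"
  using continuous_on_open_vimage[OF open_UNIV, of g] by simp

lemma open_translate:
  fixes c :: "'a::topological_ab_group_add"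
  assumes "open G" shows "open {w. w + c \<in> G}"
proof -
  have "continuous_on UNIV (\<lambda>w::'a. w + c)" by (intro continuous_intros)
  from open_vimage_UNIV[OF this assms] show ?thesis by (simp add: vimage_def)
qed

lemma open_translate2:
  fixes c :: "'a::topological_ab_group_add"
  assumes "open G" shows "open {w. w - c \<in> G}"
  using open_translate[OF assms, of "- c"] by simp

lemma add_split:
  fixes V :: "'a::topological_ab_group_add set"
  assumes "open V" "0 \<in> V"
  obtains V1 where "open V1" "0 \<in> V1" "\<And>a b. a \<in> V1 \<Longrightarrow> b \<in> V1 \<Longrightarrow> a + b \<in> V"
proof -
  have "continuous_on UNIV (\<lambda>z::'a\<times>'a. fst z + snd z)" by (intro continuous_intros)
  from open_vimage_UNIV[OF this assms(1)]
  have P: "open ((\<lambda>z::'a\<times>'a. fst z + snd z) -` V)" .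
  have "(0, 0) \<in> (\<lambda>z::'a\<times>'a. fst z + snd z) -` V" using assms(2) by simp
  from open_prod_elim[OF P this] obtain A B where AB: "open A" "open B" "(0, 0) \<in> A \<times> B"
    "A \<times> B \<subseteq> (\<lambda>z::'a\<times>'a. fst z + snd z) -` V" by blast
  show ?thesis
  proof (rule that[of "A \<inter> B"])
    show "open (A \<inter> B)" using AB by (simp add: open_Int)
    show "0 \<in> A \<inter> B" using AB(3) by simp
    fix a b assume "a \<in> A \<inter> B" "b \<in> A \<inter> B"
    then have "(a, b) \<in> A \<times> B" by simp
    then have "(a, b) \<in> (\<lambda>z::'a\<times>'a. fst z + snd z) -` V" by (rule subsetD[OF AB(4)])
    then show "a + b \<in> V" by simp
  qed
qed

lemma sum_split:
  fixes V :: "'a::topological_ab_group_add set"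
  assumes "finite K" "open V" "0 \<in> V"
  shows "\<exists>W. open W \<and> 0 \<in> W \<and> (\<forall>g. (\<forall>i\<in>K. g i \<in> W) \<longrightarrow> sum g K \<in> V)"
  using assms
proof (induction K arbitrary: V rule: finite_induct)
  case empty
  then show ?case by (intro exI[of _ UNIV]) simp
next
  case (insert k K)
  obtain V1 where V1: "open V1" "0 \<in> V1" "\<And>a b. a \<in> V1 \<Longrightarrow> b \<in> V1 \<Longrightarrow> a + b \<in> V"
    by (rule add_split[OF insert.prems]) blast
  obtain W where W: "open W" "0 \<in> W" "\<forall>g. (\<forall>i\<in>K. g i \<in> W) \<longrightarrow> sum g K \<in> V1"
    using insert.IH[OF V1(1,2)] by blast
  show ?case
  proof (intro exI conjI allI impI)
    show "open (V1 \<inter> W)" using V1(1) W(1) by (simp add: open_Int)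
    show "0 \<in> V1 \<inter> W" using V1(2) W(2) by simp
    fix g assume g: "\<forall>i\<in>insert k K. g i \<in> V1 \<inter> W"
    have "g k \<in> V1" using g by simp
    moreover have "sum g K \<in> V1" using W(3) g by simp
    ultimately have "g k + sum g K \<in> V" by (rule V1(3))
    then show "sum g (insert k K) \<in> V" using insert.hyps by simp
  qed
qed

lemma Hausdorff_euclidean_t2: "Hausdorff_space (euclidean :: 'a::t2_space topology)"
  unfolding Hausdorff_space_def
proof (intro allI impI)
  fix x y :: 'a assume "x \<in> topspace euclidean \<and> y \<in> topspace euclidean \<and> x \<noteq> y"
  then have "\<exists>U V. open U \<and> open V \<and> x \<in> U \<and> y \<in> V \<and> U \<inter> V = {}" using hausdorff by simp
  then show "\<exists>U V. openin euclidean U \<and> openin euclidean V \<and> x \<in> U \<and> y \<in> V \<and> disjnt U V"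
    by (simp add: disjnt_def)
qed




locale dir2 =
  fixes A :: "'a::{topological_ab_group_add, t2_space} set" and I :: "'i set" and h :: "'i \<Rightarrow> 'a"
  assumes ti: "top_independent A" and acs: "abs_cauchy_summable A" and hb: "bij_betw h I A"
begin

definition C :: "'i \<Rightarrow> 'a set" where "C i = range (\<lambda>z. zmult z (h i))"
definition TT :: "'i \<Rightarrow> 'a topology" where "TT i = top_of_set (C i)"
definition DD :: "('i \<Rightarrow> 'a) set" where "DD = dsum_carrier I TT (\<lambda>i. 0)"
definition ff :: "('i \<Rightarrow> 'a) \<Rightarrow> 'a" where "ff x = (\<Sum>i\<in>{i\<in>I. x i \<noteq> 0}. x i)"
definition dsub :: "('i \<Rightarrow> 'a) \<Rightarrow> ('i \<Rightarrow> 'a) \<Rightarrow> ('i \<Rightarrow> 'a)" where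
  "dsub x y = restrict (\<lambda>i. x i - y i) I"

lemma topspace_TT [simp]: "topspace (TT i) = C i" by (simp add: TT_def)

lemma C_zmult: "zmult z (h i) \<in> C i" unfolding C_def by (rule rangeI)

lemma C_0: "0 \<in> C i" using C_zmult[of 0 i] by simp

lemma C_h: "h i \<in> C i" using C_zmult[of 1 i] by simp

lemma C_add: assumes "x \<in> C i" "y \<in> C i" shows "x + y \<in> C i"
proof -
  obtain z w where "x = zmult z (h i)" "y = zmult w (h i)" using assms unfolding C_def by blast
  then have "x + y = zmult (z + w) (h i)" by (simp add: zmult_add)
  then show ?thesis by (simp add: C_zmult)
qed

lemma C_neg: assumes "x \<in> C i" shows "- x \<in> C i"
proof -
  obtain z where "x = zmult z (h i)" using assms unfolding C_def by blast
  then have "- x = zmult (- z) (h i)" by (simp add: zmult_neg)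
  then show ?thesis by (simp add: C_zmult)
qed

lemma C_diff: assumes "x \<in> C i" "y \<in> C i" shows "x - y \<in> C i"
  using C_add[OF assms(1) C_neg[OF assms(2)]] by simp

lemma C_ex: "x \<in> C i \<Longrightarrow> \<exists>z. x = zmult z (h i)" unfolding C_def by blast

lemma h_A: "i \<in> I \<Longrightarrow> h i \<in> A" using bij_betw_apply[OF hb] .
lemma inj_h: "inj_on h I" using hb by (simp add: bij_betw_def)
lemma zero_notin_A: "0 \<notin> A" using ti unfolding top_independent_def by blast
lemma h_ne0: "i \<in> I \<Longrightarrow> h i \<noteq> 0" using h_A zero_notin_A by metis

lemma grp: "ab_topgroup (TT i) (+) 0 uminus"
  unfolding ab_topgroup_def topspace_TT
proof (intro conjI ballI)
  show "0 \<in> C i" by (rule C_0)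
  fix x y assume "x \<in> C i" "y \<in> C i" then show "x + y \<in> C i" by (rule C_add)
next
  fix x assume "x \<in> C i" then show "- x \<in> C i" by (rule C_neg)
next
  fix x y z :: 'a show "x + y + z = x + (y + z)" by (simp add: add.assoc)
next
  fix x y :: 'a show "x + y = y + x" by (simp add: add.commute)
next
  fix x :: 'a show "0 + x = x" by simp
next
  fix x :: 'a show "- x + x = 0" by simp
next
  show "Hausdorff_space (TT i)" unfolding TT_def
    by (rule Hausdorff_space_subtopology[OF Hausdorff_euclidean_t2])
next
  have "continuous_on (C i \<times> C i) (\<lambda>z. fst z + snd z)" by (intro continuous_intros)
  moreover have "(\<lambda>z. fst z + snd z) \<in> C i \<times> C i \<rightarrow> C i" using C_add by auto
  ultimately show "continuous_map (prod_topology (TT i) (TT i)) (TT i) (\<lambda>(x, y). x + y)"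
    unfolding TT_def prod_topology_subtopology_eu continuous_map_subtopology_eu by (simp add: case_prod_unfold)
next
  have "continuous_on (C i) uminus" by (intro continuous_intros)
  moreover have "uminus \<in> C i \<rightarrow> C i" using C_neg by auto
  ultimately show "continuous_map (TT i) (TT i) uminus"
    unfolding TT_def continuous_map_subtopology_eu by simp
qed

lemma nontriv: "i \<in> I \<Longrightarrow> topspace (TT i) \<noteq> {0}"
  using C_h[of i] h_ne0[of i] by auto

lemma DD_iff: "x \<in> DD \<longleftrightarrow> x \<in> PiE I C \<and> finite {i\<in>I. x i \<noteq> 0}"
  unfolding DD_def dsum_carrier_def by simp

lemma ff_eq:
  assumes "finite S" "{i\<in>I. x i \<noteq> 0} \<subseteq> S" "S \<subseteq> I"
  shows "ff x = sum x S"
  unfolding ff_def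
proof (rule sum.mono_neutral_left[OF assms(1,2)])
  show "\<forall>i\<in>S - {i \<in> I. x i \<noteq> 0}. x i = 0" using assms(3) by blast
qed

lemma dsub_D:
  assumes x: "x \<in> DD" and y: "y \<in> DD" shows "dsub x y \<in> DD"
proof -
  have sub: "{i\<in>I. dsub x y i \<noteq> 0} \<subseteq> {i\<in>I. x i \<noteq> 0} \<union> {i\<in>I. y i \<noteq> 0}"
    unfolding dsub_def by auto
  have "finite {i\<in>I. dsub x y i \<noteq> 0}"
    using finite_subset[OF sub] x y unfolding DD_iff by blast
  moreover have "dsub x y \<in> PiE I C"
  proof (rule PiE_I)
    fix i assume i: "i \<in> I"
    have "x i \<in> C i" "y i \<in> C i" using x y i unfolding DD_iff by (auto simp: PiE_iff)
    then show "dsub x y i \<in> C i" using i unfolding dsub_def by (simp add: C_diff)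
  next
    fix i assume "i \<notin> I" then show "dsub x y i = undefined" unfolding dsub_def by simp
  qed
  ultimately show ?thesis unfolding DD_iff by blast
qed

lemma ff_dsub:
  assumes x: "x \<in> DD" and y: "y \<in> DD" shows "ff (dsub x y) = ff x - ff y"
proof -
  define S where "S = {i\<in>I. x i \<noteq> 0} \<union> {i\<in>I. y i \<noteq> 0}"
  have fS: "finite S" using x y unfolding S_def DD_iff by blast
  have SI: "S \<subseteq> I" unfolding S_def by blast
  have "ff x = sum x S" by (rule ff_eq[OF fS _ SI]) (auto simp: S_def)
  moreover have "ff y = sum y S" by (rule ff_eq[OF fS _ SI]) (auto simp: S_def)
  moreover have "ff (dsub x y) = sum (dsub x y) S"
    by (rule ff_eq[OF fS _ SI]) (auto simp: S_def dsub_def)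
  moreover have "sum (dsub x y) S = sum (\<lambda>i. x i - y i) S"
    using SI by (intro sum.cong) (auto simp: dsub_def)
  ultimately show ?thesis by (simp add: sum_subtractf)
qed

lemma ff_add:
  assumes x: "x \<in> DD" and y: "y \<in> DD" shows "ff (dsum_add I (\<lambda>i. (+)) x y) = ff x + ff y"
proof -
  define S where "S = {i\<in>I. x i \<noteq> 0} \<union> {i\<in>I. y i \<noteq> 0}"
  have fS: "finite S" using x y unfolding S_def DD_iff by blast
  have SI: "S \<subseteq> I" unfolding S_def by blast
  have "ff x = sum x S" by (rule ff_eq[OF fS _ SI]) (auto simp: S_def)
  moreover have "ff y = sum y S" by (rule ff_eq[OF fS _ SI]) (auto simp: S_def)
  moreover have "ff (dsum_add I (\<lambda>i. (+)) x y) = sum (dsum_add I (\<lambda>i. (+)) x y) S"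
    by (rule ff_eq[OF fS _ SI]) (auto simp: S_def dsum_add_def)
  moreover have "sum (dsum_add I (\<lambda>i. (+)) x y) S = sum (\<lambda>i. x i + y i) S"
    using SI by (intro sum.cong) (auto simp: dsum_add_def)
  ultimately show ?thesis by (simp add: sum.distrib)
qed

lemma dsub_apply: "i \<in> I \<Longrightarrow> dsub x y i = x i - y i" unfolding dsub_def by simp

end




context dir2 begin

lemma TI:
  assumes W: "0 \<in> interior W"
  shows "\<exists>U. open U \<and> 0 \<in> U \<and> (\<forall>d\<in>DD. ff d \<in> U \<longrightarrow> (\<forall>i\<in>I. d i \<in> W))"
proof -
  have ex: "\<exists>U. 0 \<in> interior U \<and> (\<forall>F z. finite F \<and> F \<subseteq> A \<and> (\<Sum>a\<in>F. zmult (z a) a) \<in> U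
             \<longrightarrow> (\<forall>a\<in>F. zmult (z a) a \<in> W))"
    using ti[unfolded top_independent_def, THEN conjunct2, rule_format, OF W] .
  then obtain U0 where U0: "0 \<in> interior U0"
    and P0: "\<forall>F z. finite F \<and> F \<subseteq> A \<and> (\<Sum>a\<in>F. zmult (z a) a) \<in> U0
             \<longrightarrow> (\<forall>a\<in>F. zmult (z a) a \<in> W)" by (elim exE conjE)
  have P: "\<forall>a\<in>F. zmult (z a) a \<in> W" if "finite F" "F \<subseteq> A" "(\<Sum>a\<in>F. zmult (z a) a) \<in> U0" for F z
    using P0 that by simp
  have "\<forall>d\<in>DD. ff d \<in> interior U0 \<longrightarrow> (\<forall>i\<in>I. d i \<in> W)"
  proof (intro ballI impI)
    fix d i assume d: "d \<in> DD" and fd: "ff d \<in> interior U0" and i: "i \<in> I"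
    define S where "S = {i\<in>I. d i \<noteq> 0}"
    have fS: "finite S" using d unfolding S_def DD_iff by blast
    have SI: "S \<subseteq> I" unfolding S_def by blast
    have dC: "\<forall>j\<in>I. \<exists>z. d j = zmult z (h j)"
    proof
      fix j assume "j \<in> I"
      then have "d j \<in> C j" using d unfolding DD_iff by (simp add: PiE_iff)
      then show "\<exists>z. d j = zmult z (h j)" by (rule C_ex)
    qed
    obtain zz where zz: "\<forall>j\<in>I. d j = zmult (zz j) (h j)" using bchoice[OF dC] by blast
    define k where "k = the_inv_into I h"
    define z where "z a = zz (k a)" for a
    have kh: "k (h j) = j" if "j \<in> I" for j unfolding k_def by (rule the_inv_into_f_f[OF inj_h that])
    define F where "F = h ` S"
    have fF: "finite F" unfolding F_def using fS by simp
    have FA: "F \<subseteq> A" unfolding F_def using SI h_A by blast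
    have injS: "inj_on h S" using inj_on_subset[OF inj_h SI] .
    have "(\<Sum>a\<in>F. zmult (z a) a) = (\<Sum>j\<in>S. zmult (z (h j)) (h j))"
      unfolding F_def by (rule sum.reindex[OF injS, unfolded comp_def])
    also have "\<dots> = (\<Sum>j\<in>S. d j)"
    proof (rule sum.cong[OF refl])
      fix j assume "j \<in> S"
      then have j: "j \<in> I" using SI by blast
      show "zmult (z (h j)) (h j) = d j" unfolding z_def kh[OF j] using zz j by simp
    qed
    also have "\<dots> = ff d" unfolding ff_def S_def ..
    finally have "(\<Sum>a\<in>F. zmult (z a) a) \<in> U0" using fd interior_subset by auto
    then have all: "\<forall>a\<in>F. zmult (z a) a \<in> W" by (rule P[OF fF FA])
    show "d i \<in> W"
    proof (cases "i \<in> S")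
      case True
      then have "h i \<in> F" unfolding F_def by blast
      then have "zmult (z (h i)) (h i) \<in> W" using all by blast
      then show ?thesis unfolding z_def kh[OF i] using zz i by simp
    next
      case False
      then have "d i = 0" using i unfolding S_def by blast
      then show ?thesis using W interior_subset by auto
    qed
  qed
  then show ?thesis using open_interior U0 by blast
qed

lemma inj_ff: "inj_on ff DD"
proof (rule inj_onI)
  fix x y assume x: "x \<in> DD" and y: "y \<in> DD" and eq: "ff x = ff y"
  have d: "dsub x y \<in> DD" by (rule dsub_D[OF x y])
  have fd: "ff (dsub x y) = 0" using ff_dsub[OF x y] eq by simp
  have zero: "dsub x y i = 0" if i: "i \<in> I" for i
  proof (rule ccontr)
    assume ne: "dsub x y i \<noteq> 0"
    define W where "W = - {dsub x y i}"
    have oW: "open W" unfolding W_def by (simp add: open_Compl)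
    have "0 \<in> W" using ne unfolding W_def by simp
    then have "0 \<in> interior W" using oW by (simp add: interior_open)
    then have "\<exists>U. open U \<and> 0 \<in> U \<and> (\<forall>d\<in>DD. ff d \<in> U \<longrightarrow> (\<forall>i\<in>I. d i \<in> W))" by (rule TI)
    then obtain U where U: "open U" "0 \<in> U" "\<forall>d\<in>DD. ff d \<in> U \<longrightarrow> (\<forall>i\<in>I. d i \<in> W)"
      by (elim exE conjE)
    have "ff (dsub x y) \<in> U" using fd U(2) by simp
    from U(3)[rule_format, OF d this i] have "dsub x y i \<in> W" .
    then show False unfolding W_def by simp
  qed
  show "x = y"
  proof
    fix i show "x i = y i"
    proof (cases "i \<in> I")
      case True then show ?thesis using zero[OF True] dsub_apply[OF True] by simp
    next
      case False
      have "x i = undefined" "y i = undefined" using x y False unfolding DD_iff by (simp_all add: PiE_iff extensional_def)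
      then show ?thesis by simp
    qed
  qed
qed

lemma topspace_X: "topspace (dsum_topology I TT (\<lambda>i. 0)) = DD"
  unfolding DD_def by (rule topspace_dsum)

end




context dir2 begin

abbreviation "XX \<equiv> dsum_topology I TT (\<lambda>i. 0)"

lemma open_ff: "open_map XX (top_of_set (ff ` DD)) ff"
  unfolding open_map_def
proof (intro allI impI)
  fix Ob assume "openin XX Ob"
  then have "\<exists>O'. openin (product_topology TT I) O' \<and> Ob = O' \<inter> DD"
    unfolding dsum_topology_def DD_def openin_subtopology .
  then obtain O' where O': "openin (product_topology TT I) O'" and Oeq: "Ob = O' \<inter> DD"
    by (elim exE conjE)
  show "openin (top_of_set (ff ` DD)) (ff ` Ob)"
  proof (subst openin_subopen, intro ballI)
    fix v assume "v \<in> ff ` Ob"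
    then obtain x0 where x0Ob: "x0 \<in> Ob" and v: "v = ff x0" by (rule imageE)
    have x0O': "x0 \<in> O'" and x0D: "x0 \<in> DD" using x0Ob Oeq by simp_all
    have "\<exists>U. finite {i \<in> I. U i \<noteq> topspace(TT i)} \<and> (\<forall>i \<in> I. openin (TT i) (U i)) \<and> x0 \<in> Pi\<^sub>E I U \<and> Pi\<^sub>E I U \<subseteq> O'"
      using O'[unfolded openin_product_topology_alt] x0O' by (rule bspec)
    then obtain U where U1: "finite {i \<in> I. U i \<noteq> topspace(TT i)}" and U2: "\<forall>i \<in> I. openin (TT i) (U i)"
      and U3: "x0 \<in> Pi\<^sub>E I U" and U4: "Pi\<^sub>E I U \<subseteq> O'" by (elim exE conjE)
    define K where "K = {i \<in> I. U i \<noteq> C i}"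
    have fK: "finite K" using U1 unfolding K_def by simp
    have exG: "\<forall>i\<in>I. \<exists>G. open G \<and> U i = C i \<inter> G"
    proof
      fix i assume "i \<in> I"
      then have "openin (top_of_set (C i)) (U i)" using U2 unfolding TT_def by simp
      then show "\<exists>G. open G \<and> U i = C i \<inter> G" unfolding openin_open .
    qed
    obtain G where G: "\<forall>i\<in>I. open (G i) \<and> U i = C i \<inter> G i" using bchoice[OF exG] by (elim exE)
    define W where "W = (\<Inter>i\<in>K. {w. w + x0 i \<in> G i})"
    have oW: "open W" unfolding W_def
    proof (rule open_INT[OF fK], rule ballI)
      fix i assume "i \<in> K" then have "open (G i)" using G unfolding K_def by simp
      then show "open {w. w + x0 i \<in> G i}" by (rule open_translate)
    qed
    have "0 \<in> W" unfolding W_def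
    proof (rule INT_I)
      fix i assume i: "i \<in> K"
      then have iI: "i \<in> I" unfolding K_def by simp
      have "x0 i \<in> U i" using U3 iI by (simp add: PiE_iff)
      then show "0 \<in> {w. w + x0 i \<in> G i}" using G iI by simp
    qed
    then have "0 \<in> interior W" using oW by (simp add: interior_open)
    then have "\<exists>U. open U \<and> 0 \<in> U \<and> (\<forall>d\<in>DD. ff d \<in> U \<longrightarrow> (\<forall>i\<in>I. d i \<in> W))" by (rule TI)
    then obtain U1 where U1o: "open U1" and U10: "0 \<in> U1"
      and U1P: "\<forall>d\<in>DD. ff d \<in> U1 \<longrightarrow> (\<forall>i\<in>I. d i \<in> W)" by (elim exE conjE)
    define T0 where "T0 = ff ` DD \<inter> {w. w - v \<in> U1}"
    show "\<exists>T. openin (top_of_set (ff ` DD)) T \<and> v \<in> T \<and> T \<subseteq> ff ` Ob"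
    proof (intro exI conjI)
      show "openin (top_of_set (ff ` DD)) T0" unfolding T0_def openin_open
        using open_translate2[OF U1o, of v] by (intro exI[of _ "{w. w - v \<in> U1}"] conjI refl)
      show "v \<in> T0" unfolding T0_def using v x0D U10 by simp
      show "T0 \<subseteq> ff ` Ob"
      proof
        fix w assume "w \<in> T0"
        then have wD: "w \<in> ff ` DD" and wU: "w - v \<in> U1" unfolding T0_def by simp_all
        then obtain x where xD: "x \<in> DD" and w: "w = ff x" by (elim imageE)
        have dD: "dsub x x0 \<in> DD" by (rule dsub_D[OF xD x0D])
        have "ff (dsub x x0) \<in> U1" using wU ff_dsub[OF xD x0D] w v by simp
        then have dW: "\<forall>i\<in>I. dsub x x0 i \<in> W" using U1P[rule_format, OF dD] by simp
        have xP: "x \<in> PiE I C" using xD unfolding DD_iff by simp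
        have "x \<in> PiE I U"
        proof (rule PiE_I)
          fix i assume i: "i \<in> I"
          have xi: "x i \<in> C i" using xP i by (simp add: PiE_iff)
          show "x i \<in> U i"
          proof (cases "i \<in> K")
            case True
            have "dsub x x0 i \<in> W" using dW i by simp
            then have "dsub x x0 i + x0 i \<in> G i" using True unfolding W_def by simp
            then have "x i \<in> G i" using dsub_apply[OF i] by simp
            then show ?thesis using G i xi by simp
          next
            case False then show ?thesis using xi i unfolding K_def by simp
          qed
        next
          fix i assume "i \<notin> I" then show "x i = undefined" using xP by (simp add: PiE_iff extensional_def)
        qed
        then have "x \<in> O'" using U4 by (rule subsetD[rotated])
        then have "x \<in> Ob" using xD Oeq by simp
        then show "w \<in> ff ` Ob" using w by simp
      qed
    qed
  qed
qed

end




lemma add_split_ex: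
  fixes V :: "'a::topological_ab_group_add set"
  assumes "open V" "0 \<in> V"
  shows "\<exists>V1. open V1 \<and> 0 \<in> V1 \<and> (\<forall>a\<in>V1. \<forall>b\<in>V1. a + b \<in> V)"
proof -
  have "continuous_on UNIV (\<lambda>z::'a\<times>'a. fst z + snd z)" by (intro continuous_intros)
  from open_vimage_UNIV[OF this assms(1)]
  have P: "open ((\<lambda>z::'a\<times>'a. fst z + snd z) -` V)" .
  have "(0, 0) \<in> (\<lambda>z::'a\<times>'a. fst z + snd z) -` V" using assms(2) by simp
  from open_prod_elim[OF P this] obtain A B where AB: "open A" "open B" "(0, 0) \<in> A \<times> B"
    "A \<times> B \<subseteq> (\<lambda>z::'a\<times>'a. fst z + snd z) -` V" by blast
  have "\<forall>a\<in>A \<inter> B. \<forall>b\<in>A \<inter> B. a + b \<in> V"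
  proof (intro ballI)
    fix a b assume "a \<in> A \<inter> B" "b \<in> A \<inter> B"
    then have "(a, b) \<in> A \<times> B" by simp
    then have "(a, b) \<in> (\<lambda>z::'a\<times>'a. fst z + snd z) -` V" by (rule subsetD[OF AB(4)])
    then show "a + b \<in> V" by simp
  qed
  moreover have "open (A \<inter> B)" using AB by (simp add: open_Int)
  moreover have "0 \<in> A \<inter> B" using AB(3) by simp
  ultimately show ?thesis by blast
qed

context dir2 begin

lemma cont_ff: "continuous_map XX euclidean ff"
  unfolding continuous_map_def topspace_X
proof (intro conjI allI impI)
  show "ff \<in> DD \<rightarrow> topspace euclidean" by simp
next
  fix U :: "'a set" assume "openin euclidean U"
  then have oU: "open U" using open_openin by blast
  show "openin XX {x \<in> DD. ff x \<in> U}"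
  proof (rule openin_subopen[THEN iffD2], intro ballI)
    fix x0 assume "x0 \<in> {x \<in> DD. ff x \<in> U}"
    then have x0D: "x0 \<in> DD" and x0U: "ff x0 \<in> U" by (simp_all only: mem_Collect_eq)
    define V0 where "V0 = {w. w + ff x0 \<in> U}"
    have oV0: "open V0" unfolding V0_def by (rule open_translate[OF oU])
    have "0 \<in> V0" unfolding V0_def using x0U by simp
    have "\<exists>V1. open V1 \<and> 0 \<in> V1 \<and> (\<forall>a\<in>V1. \<forall>b\<in>V1. a + b \<in> V0)"
      by (rule add_split_ex[OF oV0 \<open>0 \<in> V0\<close>])
    then obtain V1 where V1o: "open V1" "0 \<in> V1" and V1P: "\<forall>a\<in>V1. \<forall>b\<in>V1. a + b \<in> V0"
      by (elim exE conjE)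
    have V1: "open V1" "0 \<in> V1" "\<And>a b. a \<in> V1 \<Longrightarrow> b \<in> V1 \<Longrightarrow> a + b \<in> V0"
      using V1o V1P by simp_all
    have "0 \<in> interior V1" using V1(1,2) by (simp add: interior_open)
    then have "\<exists>F. finite F \<and> F \<subseteq> A \<and> gen_subgroup (A - F) \<subseteq> V1"
      by (rule acs[unfolded abs_cauchy_summable_def, rule_format])
    then obtain F where fF: "finite F" and FA: "F \<subseteq> A" and FV: "gen_subgroup (A - F) \<subseteq> V1"
      by (elim exE conjE)
    define K where "K = {i\<in>I. h i \<in> F}"
    have KI: "K \<subseteq> I" unfolding K_def by blast
    have "h ` K \<subseteq> F" unfolding K_def by blast
    then have "finite (h ` K)" using fF by (rule finite_subset)
    then have fK: "finite K" using inj_on_subset[OF inj_h KI] by (rule finite_imageD)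
    have "\<exists>W. open W \<and> 0 \<in> W \<and> (\<forall>g. (\<forall>i\<in>K. g i \<in> W) \<longrightarrow> sum g K \<in> V1)"
      by (rule sum_split[OF fK V1(1,2)])
    then obtain W where W: "open W" "0 \<in> W" and WP: "\<forall>g. (\<forall>i\<in>K. g i \<in> W) \<longrightarrow> sum g K \<in> V1"
      by (elim exE conjE)
    define Uc where "Uc i = (if i \<in> K then C i \<inter> {w. w - x0 i \<in> W} else C i)" for i
    define N where "N = PiE I Uc \<inter> DD"
    have "openin (product_topology TT I) (PiE I Uc)"
      unfolding openin_PiE_gen
    proof (rule disjI2, rule conjI)
      have "{i \<in> I. Uc i \<noteq> topspace (TT i)} \<subseteq> K"
      proof
        fix i assume "i \<in> {i \<in> I. Uc i \<noteq> topspace (TT i)}"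
        then have "Uc i \<noteq> C i" by simp
        then show "i \<in> K" unfolding Uc_def by (cases "i \<in> K") simp_all
      qed
      then show "finite {i \<in> I. Uc i \<noteq> topspace (TT i)}" using fK by (rule finite_subset)
      show "\<forall>i\<in>I. openin (TT i) (Uc i)"
      proof
        fix i assume "i \<in> I"
        show "openin (TT i) (Uc i)"
        proof (cases "i \<in> K")
          case True
          have "open {w. w - x0 i \<in> W}" by (rule open_translate2[OF W(1)])
          then show ?thesis unfolding TT_def Uc_def openin_open if_P[OF True]
            by (intro exI[of _ "{w. w - x0 i \<in> W}"] conjI refl)
        next
          case False
          show ?thesis unfolding TT_def Uc_def openin_open if_not_P[OF False]
            by (intro exI[of _ UNIV] conjI) simp_all
        qed
      qed
    qed
    then have oN: "openin XX N" unfolding N_def dsum_topology_def DD_def by (rule openin_subtopology_Int)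
    have x0P: "x0 \<in> PiE I C" using x0D unfolding DD_iff by simp
    have x0N: "x0 \<in> N" unfolding N_def
    proof (rule IntI[OF _ x0D], rule PiE_I)
      fix i assume i: "i \<in> I"
      have "x0 i \<in> C i" using x0P i by (simp add: PiE_iff)
      then show "x0 i \<in> Uc i" unfolding Uc_def using W(2) by simp
    next
      fix i assume "i \<notin> I" then show "x0 i = undefined" using x0P by (simp add: PiE_iff extensional_def)
    qed
    have NU: "N \<subseteq> {x \<in> DD. ff x \<in> U}"
    proof
      fix x assume "x \<in> N"
      then have xD: "x \<in> DD" and xU: "x \<in> PiE I Uc" unfolding N_def by simp_all
      define d where "d = dsub x x0"
      have dD: "d \<in> DD" unfolding d_def by (rule dsub_D[OF xD x0D])
      define S where "S = {i\<in>I. d i \<noteq> 0} \<union> K"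
      have fS: "finite S" using dD fK unfolding S_def DD_iff by simp
      have SI: "S \<subseteq> I" unfolding S_def using KI by blast
      have "ff d = sum d S" by (rule ff_eq[OF fS _ SI]) (simp add: S_def)
      also have "\<dots> = sum d (S - K) + sum d K" using sum.subset_diff[of K S d] fS S_def by simp
      finally have ffd: "ff d = sum d (S - K) + sum d K" .
      have "sum d K \<in> V1"
      proof -
        have "\<forall>i\<in>K. d i \<in> W"
        proof
          fix i assume i: "i \<in> K"
          then have iI: "i \<in> I" using KI by blast
          have "x i \<in> Uc i" using xU iI by (simp add: PiE_iff)
          then show "d i \<in> W" using i iI unfolding Uc_def d_def dsub_apply[OF iI] by simp
        qed
        then show ?thesis using WP by simp
      qed
      moreover have "sum d (S - K) \<in> V1"
      proof -
        have "sum d (S - K) \<in> gen_subgroup (A - F)"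
        proof (rule subgroup_sum[OF gen_subgroup_sub(1)])
          show "finite (S - K)" using fS by simp
        next
          fix i assume i: "i \<in> S - K"
          then have iI: "i \<in> I" using SI by blast
          have "h i \<notin> F" using i iI unfolding K_def by simp
          then have "h i \<in> A - F" using h_A[OF iI] by simp
          then have hG: "h i \<in> gen_subgroup (A - F)" using gen_subgroup_sub(2) by (rule subsetD[rotated])
          have "d i \<in> C i" using dD iI unfolding DD_iff by (simp add: PiE_iff)
          then have "\<exists>z. d i = zmult z (h i)" by (rule C_ex)
          then obtain z where "d i = zmult z (h i)" by (elim exE)
          then show "d i \<in> gen_subgroup (A - F)"
            using subgroup_zmult[OF gen_subgroup_sub(1) hG] by simp
        qed
        then show ?thesis using FV by (rule subsetD[rotated])
      qed
      ultimately have "ff d \<in> V0" unfolding ffd by (intro V1(3))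
      then have "ff d + ff x0 \<in> U" unfolding V0_def by simp
      moreover have "ff d = ff x - ff x0" unfolding d_def by (rule ff_dsub[OF xD x0D])
      ultimately have "ff x \<in> U" by simp
      then show "x \<in> {x \<in> DD. ff x \<in> U}" using xD by simp
    qed
    show "\<exists>T. openin XX T \<and> x0 \<in> T \<and> T \<subseteq> {x \<in> DD. ff x \<in> U}"
      using oN x0N NU by (intro exI[of _ N] conjI)
  qed
qed

lemma embeds: "embeds_direct_sum I TT (\<lambda>i. (+)) (\<lambda>i. 0) (\<lambda>i. uminus) ff"
  unfolding embeds_direct_sum_def
proof (intro conjI ballI)
  fix i assume "i \<in> I"
  show "ab_topgroup (TT i) (+) 0 uminus" by (rule grp)
  show "topspace (TT i) \<noteq> {0}" using nontriv \<open>i \<in> I\<close> .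
next
  fix x y assume "x \<in> dsum_carrier I TT (\<lambda>i. 0)" "y \<in> dsum_carrier I TT (\<lambda>i. 0)"
  then show "ff (dsum_add I (\<lambda>i. (+)) x y) = ff x + ff y" unfolding DD_def[symmetric] by (rule ff_add)
next
  have c: "continuous_map XX (top_of_set (ff ` DD)) ff"
    unfolding continuous_map_in_subtopology topspace_X by (intro conjI cont_ff funcsetI imageI)
  show "homeomorphic_map XX (top_of_set (ff ` dsum_carrier I TT (\<lambda>i. 0))) ff"
    unfolding DD_def[symmetric]
  proof (rule bijective_open_imp_homeomorphic_map[OF c open_ff])
    show "ff ` topspace XX = topspace (top_of_set (ff ` DD))" unfolding topspace_X by simp
    show "inj_on ff (topspace XX)" unfolding topspace_X by (rule inj_ff)
  qed
qed

end

lemma direction2: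
  fixes A :: "'a::{topological_ab_group_add, t2_space} set" and I :: "'i set"
  assumes "top_independent A" "abs_cauchy_summable A" "A \<approx> I"
  shows "\<exists>(T :: 'i \<Rightarrow> 'a topology) p e n (f :: ('i \<Rightarrow> 'a) \<Rightarrow> 'a). embeds_direct_sum I T p e n f"
proof -
  have "I \<approx> A" using assms(3) by (rule eqpoll_sym)
  then obtain h where hb: "bij_betw h I A" unfolding eqpoll_def by (elim exE)
  interpret dir2 A I h using assms(1,2) hb by unfold_locales
  show ?thesis using embeds by (intro exI)
qed


theorem corollary5p2:
  fixes I :: "'i set"
  shows "(\<forall>(T :: 'i \<Rightarrow> 'b topology) p e n (f :: ('i \<Rightarrow> 'b) \<Rightarrow> 'a::{topological_ab_group_add, t2_space}).
            embeds_direct_sum I T p e n f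
            \<longrightarrow> (\<exists>A :: 'a set. top_independent A \<and> abs_cauchy_summable A \<and> A \<approx> I))
       \<and> ((\<exists>A :: 'a set. top_independent A \<and> abs_cauchy_summable A \<and> A \<approx> I)
            \<longrightarrow> (\<exists>(T :: 'i \<Rightarrow> 'a topology) p e n (f :: ('i \<Rightarrow> 'a) \<Rightarrow> 'a).
                   embeds_direct_sum I T p e n f))"
proof (intro conjI allI impI)
  fix T :: "'i \<Rightarrow> 'b topology" and p e n and f :: "('i \<Rightarrow> 'b) \<Rightarrow> 'a"
  assume "embeds_direct_sum I T p e n f"
  then show "\<exists>A :: 'a set. top_independent A \<and> abs_cauchy_summable A \<and> A \<approx> I" by (rule direction1)
next
  assume "\<exists>A :: 'a set. top_independent A \<and> abs_cauchy_summable A \<and> A \<approx> I"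
  then obtain A :: "'a set" where "top_independent A" "abs_cauchy_summable A" "A \<approx> I" by (elim exE conjE)
  then show "\<exists>(T :: 'i \<Rightarrow> 'a topology) p e n (f :: ('i \<Rightarrow> 'a) \<Rightarrow> 'a). embeds_direct_sum I T p e n f"
    by (rule direction2)
qed

end
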